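(* Under the setting below, for every $k\in\{1,\dots,p-1\}$, $$\mathsf v_n^{2k}=\frac{(-1)^k\,(v_n^{2p}\kappa_n^{2p}+1)}{p\,\kappa_n^{2k}(\kappa_n^2-\kappa_n^{-2})}\sum_{a=0}^{p-1}q^{-k(2a-1)}\beta_{a,n}.$$ Moreover, $\beta_{k,n}=\mathsf u_n^k\alpha_{0,n}\mathsf u_n^{1-k}$, and hence, using the known reconstruction identities below, $$\beta_{k,n}=\mathsf U_n\Big[\big(\mathsf B^{-1}(\mu_{n,+})\mathsf A(\mu_{n,+})\big)^k\,\mathsf A^{-1}(\mu_{n,-})\mathsf B(\mu_{n,-})\,\big(\mathsf B^{-1}(\mu_{n,+})\mathsf A(\mu_{n,+})\big)^{1-k}\Big]\mathsf U_n^{-1}.$$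
   Context: Let $p\ge3$ be odd, $q\in\mathbb C$ with $q^p=1$ and $q^2$ a primitive $p$-th root of unity, $q^{1/2}$ a fixed square root with $(q^{1/2})^2=q$. At site $n$ of a chain of $\mathsf N$ sites, $\mathsf u_n,\mathsf v_n$ are invertible operators on $\mathbb C^p$ (tensored with identity elsewhere) with $\mathsf u_n\mathsf v_n=q\mathsf v_n\mathsf u_n$, $\mathsf u_n^p=u_n^p\,\mathrm{Id}$, $\mathsf v_n^p=v_n^p\,\mathrm{Id}$ for nonzero scalars $u_n,v_n$; operators at different sites commute. Let $\kappa_n\ne0$ with $\kappa_n^4\ne1$ and $v_n^{2p}\kappa_n^{2p}\ne-1$. Define $\beta_{k,n}=(q^{2k-1}\mathsf v_n^2+\kappa_n^2)(q^{2k-1}\mathsf v_n^2\kappa_n^2+1)^{-1}$ for $k\in\mathbb Z$, and $\alpha_{0,n}=(q^{-1}\mathsf v_n^2+\kappa_n^2)(q^{-1}\mathsf v_n^2\kappa_n^2+1)^{-1}\mathsf u_n^{-1}$. For the second part: the Lax matrix is $\mathsf L_n(\lambda)=\kappa_n\begin{pmatrix}\mathsf u_n(q^{-1/2}\mathsf v_n\kappa_n+q^{1/2}\mathsf v_n^{-1}\kappa_n^{-1})&(\lambda_n\mathsf v_n-(\mathsf v_n\lambda_n)^{-1})/i\\(\lambda_n/\mathsf v_n-\mathsf v_n/\lambda_n)/i&\mathsf u_n^{-1}(q^{1/2}\mathsf v_n\kappa_n^{-1}+q^{-1/2}\mathsf v_n^{-1}\kappa_n)\end{pmatrix}$, $\lambda_n=\lambda/\xi_n$,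 and $\mathsf L_{\mathsf N}(\lambda)\cdots\mathsf L_1(\lambda)=\begin{pmatrix}\mathsf A(\lambda)&\mathsf B(\lambda)\\ \mathsf C(\lambda)&\mathsf D(\lambda)\end{pmatrix}$. Set $\mu_{n,\pm}=i\kappa_n^{\pm1}q^{1/2}\xi_n$. $\mathsf U_n$ is an invertible operator with $\mathsf U_n\mathsf L_{\mathsf N}(\lambda)\cdots\mathsf L_1(\lambda)\mathsf U_n^{-1}=\mathsf L_{n-1}(\lambda)\cdots\mathsf L_1(\lambda)\mathsf L_{\mathsf N}(\lambda)\cdots\mathsf L_n(\lambda)$. Assume $\mathsf B(\mu_{n,+})$ and $\mathsf A(\mu_{n,-})$ are invertible. Known identities (Oota): $\mathsf u_n=\mathsf U_n\mathsf B^{-1}(\mu_{n,+})\mathsf A(\mu_{n,+})\mathsf U_n^{-1}$ and $\alpha_{0,n}=\mathsf U_n\mathsf A^{-1}(\mu_{n,-})\mathsf B(\mu_{n,-})\mathsf U_n^{-1}$. *)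

theory Defs
  imports "HOL-Analysis.Analysis"
begin

text \<open>Operators on the (finite-dimensional) state space are modelled as complex square
matrices of type complex^'d^'d; matrix product is ** and the scalar c is the operator mat c.\<close>

type_synonym 'd op = "complex^'d^'d"

primrec mpow :: "'d::finite op \<Rightarrow> nat \<Rightarrow> 'd op" where
  "mpow A 0 = mat 1"
| "mpow A (Suc k) = A ** mpow A k"

definition zpow :: "'d::finite op \<Rightarrow> int \<Rightarrow> 'd op" where
  "zpow A k = (if 0 \<le> k then mpow A (nat k) else mpow (matrix_inv A) (nat (- k)))"

definition primitive_root :: "nat \<Rightarrow> complex \<Rightarrow> bool" where
  "primitive_root p z \<longleftrightarrow> z ^ p = 1 \<and> (\<forall>j. 0 < j \<and> j < p \<longrightarrow> z ^ j \<noteq> 1)"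

definition beta :: "complex \<Rightarrow> complex \<Rightarrow> 'd::finite op \<Rightarrow> int \<Rightarrow> 'd op" where
  "beta q \<kappa> V k =
     (mat (q powi (2*k - 1)) ** (V ** V) + mat (\<kappa>^2)) **
     matrix_inv (mat (q powi (2*k - 1) * \<kappa>^2) ** (V ** V) + mat 1)"

definition alpha0 :: "complex \<Rightarrow> complex \<Rightarrow> 'd::finite op \<Rightarrow> 'd op \<Rightarrow> 'd op" where
  "alpha0 q \<kappa> U V =
     (mat (inverse q) ** (V ** V) + mat (\<kappa>^2)) **
     matrix_inv (mat (inverse q * \<kappa>^2) ** (V ** V) + mat 1) ** matrix_inv U"

text \<open>2x2 matrices with operator entries, written (A, B, C, D) for [[A,B],[C,D]].\<close>
type_synonym 'd mat2 = "'d op \<times> 'd op \<times> 'd op \<times> 'd op"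

fun mul2 :: "'d::finite mat2 \<Rightarrow> 'd mat2 \<Rightarrow> 'd mat2" where
  "mul2 (a, b, c, d) (e, f, g, h) =
     (a ** e + b ** g, a ** f + b ** h, c ** e + d ** g, c ** f + d ** h)"

definition id2 :: "'d::finite mat2" where
  "id2 = (mat 1, mat 0, mat 0, mat 1)"

fun conj2 :: "'d::finite op \<Rightarrow> 'd mat2 \<Rightarrow> 'd mat2" where
  "conj2 W (a, b, c, d) =
     (W ** a ** matrix_inv W, W ** b ** matrix_inv W,
      W ** c ** matrix_inv W, W ** d ** matrix_inv W)"

text \<open>Lax matrix L_n(lambda), with qh = q^{1/2} and lambda_n = lambda / xi_n.\<close>
definition lax :: "complex \<Rightarrow> (nat \<Rightarrow> 'd::finite op) \<Rightarrow> (nat \<Rightarrow> 'd op) \<Rightarrow>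
    (nat \<Rightarrow> complex) \<Rightarrow> (nat \<Rightarrow> complex) \<Rightarrow> nat \<Rightarrow> complex \<Rightarrow> 'd mat2" where
  "lax qh u v \<kappa> \<xi> n lam =
    (let l = lam / \<xi> n; k = \<kappa> n; U = u n; V = v n;
         Ui = matrix_inv U; Vi = matrix_inv V
     in (mat k ** U ** (mat (inverse qh * k) ** V + mat (qh * inverse k) ** Vi),
         mat (k / \<i>) ** (mat l ** V - mat (inverse l) ** Vi),
         mat (k / \<i>) ** (mat l ** Vi - mat (inverse l) ** V),
         mat k ** Ui ** (mat (qh * inverse k) ** V + mat (inverse qh * k) ** Vi)))"

definition laxprod :: "complex \<Rightarrow> (nat \<Rightarrow> 'd::finite op) \<Rightarrow> (nat \<Rightarrow> 'd op) \<Rightarrow>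
    (nat \<Rightarrow> complex) \<Rightarrow> (nat \<Rightarrow> complex) \<Rightarrow> nat list \<Rightarrow> complex \<Rightarrow> 'd mat2" where
  "laxprod qh u v \<kappa> \<xi> ms lam = foldr (\<lambda>m acc. mul2 (lax qh u v \<kappa> \<xi> m lam) acc) ms id2"

text \<open>Monodromy L_N ... L_1 and its entries A, B.\<close>
definition monodromy :: "complex \<Rightarrow> (nat \<Rightarrow> 'd::finite op) \<Rightarrow> (nat \<Rightarrow> 'd op) \<Rightarrow>
    (nat \<Rightarrow> complex) \<Rightarrow> (nat \<Rightarrow> complex) \<Rightarrow> nat \<Rightarrow> complex \<Rightarrow> 'd mat2" where
  "monodromy qh u v \<kappa> \<xi> N lam = laxprod qh u v \<kappa> \<xi> (rev [1..<N+1]) lam"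

definition opA :: "'d::finite mat2 \<Rightarrow> 'd op" where "opA M = fst M"
definition opB :: "'d::finite mat2 \<Rightarrow> 'd op" where "opB M = fst (snd M)"

end

theory Submission
  imports Defs
begin

lemma mat_lmult: "(mat a ** (A::'d::finite op)) = (\<chi> i j. a * A$i$j)"
  unfolding matrix_matrix_mult_def mat_def
  by (auto simp: if_distrib if_distribR sum.delta[OF finite] cong: if_cong)

lemma mat_rmult: "((A::'d::finite op) ** mat a) = (\<chi> i j. A$i$j * a)"
  unfolding matrix_matrix_mult_def mat_def
  by (auto simp: if_distrib if_distribR sum.delta'[OF finite] cong: if_cong)

lemma mat_mult_mat: "(mat a ** mat b :: 'd::finite op) = mat (a*b)"
  unfolding mat_lmult by (simp add: mat_def vec_eq_iff)

lemma mat_comm: "mat a ** (A::'d::finite op) = A ** mat a"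
  unfolding mat_lmult mat_rmult by (simp add: vec_eq_iff mult.commute)

lemma mat_add: "mat a + mat b = (mat (a+b) :: 'd::finite op)"
  by (simp add: vec_eq_iff mat_def)

lemma mat_diff: "mat a - mat b = (mat (a-b) :: 'd::finite op)"
  by (simp add: vec_eq_iff mat_def)

lemma mat_uminus: "- mat a = (mat (-a) :: 'd::finite op)"
  by (simp add: vec_eq_iff mat_def)

lemma matrix_add_rdistrib: "((A::'d::finite op) + B) ** C = A ** C + B ** C"
  by (simp add: matrix_matrix_mult_def vec_eq_iff distrib_right sum.distrib)

lemma matrix_diff_rdistrib: "((A::'d::finite op) - B) ** C = A ** C - B ** C"
  by (simp add: matrix_matrix_mult_def vec_eq_iff left_diff_distrib sum_subtractf)

lemma matrix_diff_ldistrib: "(A::'d::finite op) ** (B - C) = A ** B - A ** C"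
  by (simp add: matrix_matrix_mult_def vec_eq_iff right_diff_distrib sum_subtractf)

lemma uminus_rmult: "(- (A::'d::finite op)) ** C = - (A ** C)"
  by (simp add: matrix_matrix_mult_def vec_eq_iff sum_negf)

lemma sum_rmult: "(\<Sum>i\<in>S. (f i::'d::finite op)) ** (B::'d::finite op) = (\<Sum>i\<in>S. f i ** B)"
proof (cases "finite S")
  case True thus ?thesis by (induction S rule: finite_induct) (auto simp: matrix_add_rdistrib)
qed simp

lemma sum_lmult: "(B::'d::finite op) ** (\<Sum>i\<in>S. (f i::'d::finite op)) = (\<Sum>i\<in>S. B ** f i)"
proof (cases "finite S")
  case True thus ?thesis by (induction S rule: finite_induct) (auto simp: matrix_add_ldistrib)
qed simp

lemma mat_sum: "mat (\<Sum>i\<in>S. f i) = (\<Sum>i\<in>S. (mat (f i) :: 'd::finite op))"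
proof (cases "finite S")
  case True thus ?thesis by (induction S rule: finite_induct) (auto simp: mat_add[symmetric])
qed simp

lemma mpow_add: "mpow (A::'d::finite op) (m+n) = mpow A m ** mpow A n"
  by (induction m) (auto simp: matrix_mul_assoc)

lemma mpow_comm: "A ** mpow (A::'d::finite op) n = mpow A n ** A"
  using mpow_add[of A n 1] mpow_add[of A 1 n] by (simp add: add.commute)

lemma mpow_mult: "mpow (A::'d::finite op) (m*n) = mpow (mpow A m) n"
  by (induction n) (auto simp: mpow_add)

lemma mpow_two: "mpow (A::'d::finite op) 2 = A ** A"
  by (simp add: numeral_2_eq_2)

lemma mpow_mat: "mpow (mat c ** (A::'d::finite op)) n = mat (c^n) ** mpow A n"
proof (induction n)
  case 0 show ?case by simp
next
  case (Suc n)
  have "mpow (mat c ** A) (Suc n) = mat c ** A ** (mat (c^n) ** mpow A n)" using Suc by simp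
  also have "\<dots> = mat c ** (A ** mat (c^n)) ** mpow A n" by (simp add: matrix_mul_assoc)
  also have "\<dots> = mat c ** (mat (c^n) ** A) ** mpow A n" by (subst mat_comm[of "c^n" A]) (rule refl)
  also have "\<dots> = mat c ** mat (c^n) ** (A ** mpow A n)" by (simp add: matrix_mul_assoc)
  finally show ?case by (simp add: mat_mult_mat)
qed

lemma mpow_conj:
  assumes "U ** Y = mat d ** Y ** (U::'d::finite op)"
  shows "U ** mpow Y j = mat (d^j) ** mpow Y j ** U"
proof (induction j)
  case 0 show ?case by simp
next
  case (Suc j)
  have "U ** mpow Y (Suc j) = (U ** Y) ** mpow Y j" by (simp add: matrix_mul_assoc)
  also have "\<dots> = mat d ** Y ** (U ** mpow Y j)" using assms by (simp add: matrix_mul_assoc)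
  also have "\<dots> = mat d ** Y ** (mat (d^j) ** mpow Y j ** U)" using Suc by simp
  also have "\<dots> = mat d ** (Y ** mat (d^j)) ** mpow Y j ** U" by (simp add: matrix_mul_assoc)
  also have "\<dots> = mat d ** (mat (d^j) ** Y) ** mpow Y j ** U" by (subst mat_comm[of "d^j" Y]) (rule refl)
  also have "\<dots> = (mat d ** mat (d^j)) ** (Y ** mpow Y j) ** U" by (simp add: matrix_mul_assoc)
  finally show ?case by (simp add: mat_mult_mat mult.commute)
qed

lemma inv_left: "invertible (A::'d::finite op) \<Longrightarrow> matrix_inv A ** A = mat 1"
  unfolding invertible_def matrix_inv_def by (rule someI2_ex) auto

lemma inv_right: "invertible (A::'d::finite op) \<Longrightarrow> A ** matrix_inv A = mat 1"
  unfolding invertible_def matrix_inv_def by (rule someI2_ex) auto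

lemma inv_unique: "(A::'d::finite op) ** B = mat 1 \<Longrightarrow> matrix_inv A = B"
proof -
  assume h: "A ** B = mat 1"
  hence h2: "B ** A = mat 1" using matrix_left_right_inverse by blast
  hence "invertible A" using h invertible_def by blast
  hence "matrix_inv A = matrix_inv A ** (A ** B)" using h by simp
  also have "\<dots> = B" using inv_left[OF \<open>invertible A\<close>] by (simp add: matrix_mul_assoc)
  finally show ?thesis .
qed

lemma invI: "(A::'d::finite op) ** B = mat 1 \<Longrightarrow> invertible A"
  using invertible_right_inverse by blast

lemma geo_zero:
  fixes q :: complex
  assumes q0: "q \<noteq> 0" and qp: "q^p = 1" and prim: "primitive_root p (q^2)"
    and m: "m \<noteq> 0" "\<bar>m\<bar> < int p"
  shows "(\<Sum>a<p. q powi ((2*int a - 1)*m)) = 0"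
proof -
  define r where "r = q powi (2*m)"
  have t: "q powi ((2*int a - 1)*m) = q powi (-m) * r ^ a" for a
  proof -
    have "(2*int a - 1)*m = -m + 2*m*int a" by (simp add: algebra_simps)
    moreover have "q powi (-m + 2*m*int a) = q powi (-m) * q powi (2*m*int a)"
      by (rule power_int_add) (simp add: q0)
    ultimately have "q powi ((2*int a - 1)*m) = q powi (-m) * q powi (2*m*int a)"
      by simp
    thus ?thesis by (simp add: r_def power_int_power')
  qed
  have r2: "r = (q^2) powi m" by (simp add: r_def power_int_power)
  have r1: "r \<noteq> 1"
  proof (cases "m > 0")
    case True
    hence "r = (q^2)^(nat m)" using r2 by (simp add: power_int_nonneg_exp)
    moreover have "0 < nat m" "nat m < p" using True m by auto
    ultimately show ?thesis using prim unfolding primitive_root_def by auto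
  next
    case False
    hence mm: "m = - int (nat (-m))" using m by auto
    have "r = inverse ((q^2)^(nat (-m)))" using r2 mm
      by (metis power_int_minus power_int_of_nat)
    moreover have "0 < nat (-m)" "nat (-m) < p" using False m by auto
    ultimately show ?thesis using prim unfolding primitive_root_def
      by (metis inverse_1 inverse_inverse_eq)
  qed
  have rp: "r ^ p = 1"
  proof -
    have "r ^ p = (q^2) powi (m * int p)" using r2 by (simp add: power_int_power')
    also have "\<dots> = ((q^2) powi (int p)) powi m" by (metis power_int_mult mult.commute)
    also have "(q^2) powi (int p) = 1"
    proof -
      have "(q^2) powi (int p) = (q^2)^p" by simp
      also have "\<dots> = (q^p)^2" by (metis power_mult mult.commute)
      finally show ?thesis using qp by simp
    qed
    finally show ?thesis by simp
  qed
  have "(\<Sum>a<p. q powi ((2*int a - 1)*m)) = q powi (-m) * (\<Sum>a<p. r^a)"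
    by (simp add: t sum_distrib_left)
  also have "(\<Sum>a<p. r^a) = 0" using geometric_sum[OF r1, of p] rp by simp
  finally show ?thesis by simp
qed

lemma inv_formula:
  fixes X :: "'d::finite op"
  assumes Xp: "mpow X p = mat s" and op: "odd p" and s: "s \<noteq> -1"
  shows "(X + mat 1) ** (\<Sum>j<p. mat ((-1)^j / (1+s)) ** mpow X j) = mat 1"
proof -
  define g where "g j = mat ((-1)^j / (1+s)) ** mpow X j" for j
  have step: "(X + mat 1) ** g j = g j - g (Suc j)" for j
  proof -
    have "X ** g j = mat ((-1)^j / (1+s)) ** mpow X (Suc j)"
      unfolding g_def
    proof -
      have "X ** (mat ((-1)^j / (1+s)) ** mpow X j) = (X ** mat ((-1)^j / (1+s))) ** mpow X j"
        by (simp add: matrix_mul_assoc)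
      also have "\<dots> = (mat ((-1)^j / (1+s)) ** X) ** mpow X j"
        by (subst mat_comm[of "(-1)^j / (1+s)" X]) (rule refl)
      finally show "X ** (mat ((-1)^j / (1+s)) ** mpow X j) = mat ((-1)^j / (1+s)) ** mpow X (Suc j)"
        by (simp add: matrix_mul_assoc)
    qed
    also have "\<dots> = - g (Suc j)" unfolding g_def
      by (simp add: mat_uminus[symmetric] uminus_rmult)
    finally show ?thesis by (simp add: matrix_add_rdistrib)
  qed
  have "(X + mat 1) ** (\<Sum>j<p. g j) = (\<Sum>j<p. g j - g (Suc j))"
    by (simp add: sum_lmult step)
  also have "\<dots> = g 0 - g p" by (rule sum_lessThan_telescope')
  also have "\<dots> = mat 1"
  proof -
    have s1: "1 + s \<noteq> 0" using s by (metis add.commute add_eq_0_iff)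
    have m1: "(-1::complex)^p = -1" using op by simp
    have "g p = mat ((-1) / (1+s)) ** mat s" unfolding g_def Xp m1 by simp
    also have "\<dots> = mat ((-1) / (1+s) * s)" by (rule mat_mult_mat)
    finally have gp: "g p = mat ((-1) / (1+s) * s)" .
    have g0: "g 0 = mat (1/(1+s))" unfolding g_def by simp
    have e: "1/(1+s) - (-1) / (1+s) * s = 1" using s1 by (simp add: field_simps)
    show ?thesis unfolding gp g0 mat_diff e ..
  qed
  finally show ?thesis unfolding g_def .
qed

definition FF :: "'d::finite op \<Rightarrow> complex \<Rightarrow> complex \<Rightarrow> 'd op" where
  "FF Y K c = (mat c ** Y + mat K) ** matrix_inv (mat (c*K) ** Y + mat 1)"

lemma geo_full:
  fixes q :: complex
  assumes q0: "q \<noteq> 0" and qp: "q^p = 1" and prim: "primitive_root p (q^2)"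
    and j: "j < p" and k: "k < p"
  shows "(\<Sum>a<p. q powi (-(int k*(2*int a-1))) * (q powi (2*int a - 1))^j) = (if j = k then of_nat p else 0)"
proof -
  have t: "q powi (-(int k*(2*int a-1))) * (q powi (2*int a - 1))^j = q powi ((2*int a - 1)*(int j - int k))" for a
  proof -
    have "(q powi (2*int a - 1))^j = q powi ((2*int a - 1) * int j)" by (simp add: power_int_power')
    moreover have "q powi ((2*int a - 1)*(int j - int k)) = q powi (-(int k*(2*int a-1))) * q powi ((2*int a - 1) * int j)"
    proof -
      have "(2*int a - 1)*(int j - int k) = -(int k*(2*int a-1)) + (2*int a - 1) * int j"
        by (simp add: algebra_simps)
      moreover have "q powi (-(int k*(2*int a-1)) + (2*int a - 1) * int j) = q powi (-(int k*(2*int a-1))) * q powi ((2*int a - 1) * int j)"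
        by (rule power_int_add) (simp add: q0)
      ultimately show ?thesis by simp
    qed
    ultimately show ?thesis by simp
  qed
  have e: "(\<Sum>a<p. q powi (-(int k*(2*int a-1))) * (q powi (2*int a - 1))^j) = (\<Sum>a<p. q powi ((2*int a - 1)*(int j - int k)))"
    by (simp only: t)
  show ?thesis
  proof (cases "j = k")
    case True thus ?thesis unfolding e by simp
  next
    case False
    have "(\<Sum>a<p. q powi ((2*int a - 1)*(int j - int k))) = 0"
      by (rule geo_zero[OF q0 qp prim]) (use False j k in auto)
    thus ?thesis using False unfolding e by simp
  qed
qed

lemma F_expand:
  fixes Y :: "'d::finite op" and K t c :: complex
  assumes cp: "c^p = 1" and Yp: "mpow Y p = mat t" and op: "odd p"
    and S: "K^p * t \<noteq> -1" and K0: "K \<noteq> 0"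
  shows "invertible (mat (c*K) ** Y + mat 1)"
    and "FF Y K c = mat (1/K) + (\<Sum>j<p. mat ((K-1/K)*((-1)^j/(1+K^p*t)*K^j) * c^j) ** mpow Y j)"
proof -
  define M where "M = mat (c*K) ** Y + mat 1"
  define X where "X = mat (c*K) ** Y"
  define s where "s = K^p * t"
  have Xp: "mpow X p = mat s" unfolding X_def s_def mpow_mat Yp mat_mult_mat
    using cp by (simp add: power_mult_distrib)
  have s1: "s \<noteq> -1" using S s_def by simp
  have MI: "M ** (\<Sum>j<p. mat ((-1)^j / (1+s)) ** mpow X j) = mat 1"
    unfolding M_def X_def[symmetric] by (rule inv_formula[OF Xp op s1])
  show inv: "invertible (mat (c*K) ** Y + mat 1)" using invI[OF MI] M_def by simp
  have iM: "matrix_inv M = (\<Sum>j<p. mat ((-1)^j / (1+s)) ** mpow X j)"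
    by (rule inv_unique[OF MI])
  have A: "mat c ** Y + mat K = mat (1/K) ** M + mat (K - 1/K)"
  proof -
    have "mat (1/K) ** M = mat (1/K) ** mat (c*K) ** Y + mat (1/K)"
      unfolding M_def by (simp add: matrix_add_ldistrib matrix_mul_assoc)
    also have "mat (1/K) ** mat (c*K) = (mat c :: 'd op)" using K0 by (simp add: mat_mult_mat)
    finally have "mat (1/K) ** M + mat (K - 1/K) = mat c ** Y + (mat (1/K) + mat (K - 1/K))"
      by (simp add: add.assoc)
    thus ?thesis by (simp add: mat_add)
  qed
  have "FF Y K c = (mat (1/K) ** M + mat (K - 1/K)) ** matrix_inv M"
    unfolding FF_def A M_def ..
  also have "\<dots> = mat (1/K) ** (M ** matrix_inv M) + mat (K - 1/K) ** matrix_inv M"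
    by (simp add: matrix_add_rdistrib matrix_mul_assoc)
  also have "M ** matrix_inv M = mat 1" using inv_right inv M_def by simp
  also have "mat (K - 1/K) ** matrix_inv M =
      (\<Sum>j<p. mat ((K-1/K)*((-1)^j/(1+K^p*t)*K^j) * c^j) ** mpow Y j)"
    unfolding iM sum_lmult
  proof (rule sum.cong[OF refl])
    fix j
    have "mat (K - 1/K) ** (mat ((-1)^j / (1+s)) ** mpow X j)
       = mat ((K - 1/K) * ((-1)^j / (1+s)) * (c*K)^j) ** mpow Y j"
      unfolding X_def mpow_mat by (simp add: matrix_mul_assoc mat_mult_mat mult.assoc)
    also have "(K - 1/K) * ((-1)^j / (1+s)) * (c*K)^j = (K-1/K)*((-1)^j/(1+K^p*t)*K^j) * c^j"
      unfolding s_def by (simp add: power_mult_distrib mult_ac)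
    finally show "mat (K - 1/K) ** (mat ((-1)^j / (1+s)) ** mpow X j) =
      mat ((K-1/K)*((-1)^j/(1+K^p*t)*K^j) * c^j) ** mpow Y j" .
  qed
  finally show "FF Y K c = mat (1/K) + (\<Sum>j<p. mat ((K-1/K)*((-1)^j/(1+K^p*t)*K^j) * c^j) ** mpow Y j)"
    by simp
qed

lemma part1_generic:
  fixes Y :: "'d::finite op" and q K t :: complex
  assumes q0: "q \<noteq> 0" and qp: "q^p = 1" and prim: "primitive_root p (q^2)"
    and Yp: "mpow Y p = mat t" and op: "odd p"
    and S: "K^p * t \<noteq> -1" and K0: "K \<noteq> 0" and k: "1 \<le> k" "k < p"
  shows "(\<Sum>a<p. mat (q powi (-(int k*(2*int a-1)))) ** FF Y K (q powi (2*int a - 1)))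
     = mat (of_nat p * ((K-1/K)*((-1)^k/(1+K^p*t)*K^k))) ** mpow Y k"
proof -
  define w where "w a = q powi (-(int k*(2*int a-1)))" for a :: nat
  define c where "c a = q powi (2*int a - 1)" for a :: nat
  define D where "D j = (K-1/K)*((-1)^j/(1+K^p*t)*K^j)" for j :: nat
  have cp: "(c a)^p = 1" for a
  proof -
    have "(c a)^p = q powi (int p * (2*int a - 1))" unfolding c_def by (simp add: power_int_power' mult.commute)
    also have "\<dots> = (q powi (int p)) powi (2*int a - 1)" by (rule power_int_mult)
    finally show ?thesis using qp by simp
  qed
  have FE: "FF Y K (c a) = mat (1/K) + (\<Sum>j<p. mat (D j * (c a)^j) ** mpow Y j)" for a
    unfolding D_def by (rule F_expand(2)[OF cp Yp op S K0])
  have "(\<Sum>a<p. mat (w a) ** FF Y K (c a))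
      = (\<Sum>a<p. mat (w a * (1/K))) + (\<Sum>a<p. \<Sum>j<p. mat (w a * (D j * (c a)^j)) ** mpow Y j)"
    unfolding FE by (simp add: matrix_add_ldistrib sum.distrib sum_lmult matrix_mul_assoc mat_mult_mat)
  also have "(\<Sum>a<p. mat (w a * (1/K))) = (mat ((\<Sum>a<p. w a * (c a)^0) * (1/K)) :: 'd op)"
    by (simp add: mat_sum sum_divide_distrib)
  also have "(\<Sum>a<p. w a * (c a)^0) = 0"
    unfolding w_def c_def using geo_full[OF q0 qp prim, of 0 k] k by simp
  also have "(\<Sum>a<p. \<Sum>j<p. mat (w a * (D j * (c a)^j)) ** mpow Y j)
      = (\<Sum>j<p. mat (D j * (\<Sum>a<p. w a * (c a)^j)) ** mpow Y j)"
    by (subst sum.swap) (simp add: mat_sum[symmetric] sum_rmult[symmetric] sum_distrib_left mult_ac)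
  also have "\<dots> = (\<Sum>j<p. if j = k then mat (D k * of_nat p) ** mpow Y k else 0)"
    apply (rule sum.cong[OF refl])
    subgoal for j using geo_full[OF q0 qp prim, of j k] k by (auto simp: w_def c_def)
    done
  also have "\<dots> = mat (D k * of_nat p) ** mpow Y k" using k by simp
  finally show ?thesis unfolding w_def c_def D_def by (simp add: mult_ac)
qed

lemma lin_conj:
  assumes "U ** Y = mat d ** Y ** (U::'d::finite op)"
  shows "U ** (mat e ** Y + mat f) = (mat (d*e) ** Y + mat f) ** U"
proof -
  have "U ** (mat e ** Y) = (U ** mat e) ** Y" by (simp add: matrix_mul_assoc)
  also have "U ** mat e = mat e ** U" by (rule mat_comm[symmetric])
  also have "(mat e ** U) ** Y = mat e ** (U ** Y)" by (simp add: matrix_mul_assoc)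
  also have "\<dots> = mat e ** (mat d ** Y ** U)" using assms by simp
  also have "\<dots> = mat (d*e) ** Y ** U" by (simp add: matrix_mul_assoc mat_mult_mat mult.commute)
  finally show ?thesis by (simp add: matrix_add_ldistrib matrix_add_rdistrib mat_comm)
qed

lemma FF_conj:
  fixes U Y :: "'d::finite op"
  assumes UY: "U ** Y = mat d ** Y ** U"
    and i1: "invertible (mat (c*K) ** Y + mat 1)" and i2: "invertible (mat ((d*c)*K) ** Y + mat 1)"
  shows "U ** FF Y K c = FF Y K (d*c) ** U"
proof -
  define M1 where "M1 = mat (c*K) ** Y + mat 1"
  define M2 where "M2 = mat ((d*c)*K) ** Y + mat 1"
  have MM: "U ** M1 = M2 ** U" unfolding M1_def M2_def using lin_conj[OF UY] by (simp add: mult.assoc)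
  have AA: "U ** (mat c ** Y + mat K) = (mat (d*c) ** Y + mat K) ** U" by (rule lin_conj[OF UY])
  have iM: "U ** matrix_inv M1 = matrix_inv M2 ** U"
  proof -
    have r1: "M1 ** matrix_inv M1 = mat 1" using inv_right[OF i1] unfolding M1_def .
    have l2: "matrix_inv M2 ** M2 = mat 1" using inv_left[OF i2] unfolding M2_def .
    have "matrix_inv M2 ** U = matrix_inv M2 ** U ** (M1 ** matrix_inv M1)"
      by (simp add: r1)
    also have "\<dots> = matrix_inv M2 ** (U ** M1) ** matrix_inv M1" by (simp add: matrix_mul_assoc)
    also have "\<dots> = (matrix_inv M2 ** M2) ** U ** matrix_inv M1" unfolding MM by (simp add: matrix_mul_assoc)
    also have "\<dots> = U ** matrix_inv M1" by (simp add: l2)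
    finally show ?thesis by simp
  qed
  have "U ** FF Y K c = (U ** (mat c ** Y + mat K)) ** matrix_inv M1"
    unfolding FF_def M1_def by (simp add: matrix_mul_assoc)
  also have "\<dots> = (mat (d*c) ** Y + mat K) ** (U ** matrix_inv M1)" unfolding AA by (simp add: matrix_mul_assoc)
  also have "\<dots> = FF Y K (d*c) ** U" unfolding iM FF_def M2_def by (simp add: matrix_mul_assoc)
  finally show ?thesis .
qed

lemma mpow_shift:
  assumes "\<forall>m. A ** H m = H (m + e) ** (A::'d::finite op)"
  shows "mpow A n ** H m = H (m + int n * e) ** mpow A n"
proof (induction n arbitrary: m)
  case 0 show ?case by simp
next
  case (Suc n)
  have "mpow A (Suc n) ** H m = A ** (mpow A n ** H m)" by (simp add: matrix_mul_assoc)
  also have "\<dots> = (A ** H (m + int n * e)) ** mpow A n" using Suc by (simp add: matrix_mul_assoc)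
  also have "\<dots> = H (m + int n * e + e) ** (A ** mpow A n)" using assms by (simp add: matrix_mul_assoc)
  finally show ?case by (simp add: algebra_simps)
qed

lemma zpow_shift:
  fixes U :: "'d::finite op"
  assumes iU: "invertible U" and sh: "\<forall>m. U ** H m = H (m + 2) ** U"
  shows "zpow U k ** H m = H (m + 2*k) ** zpow U k"
proof -
  have sh2: "\<forall>m. matrix_inv U ** H m = H (m + (-2)) ** matrix_inv U"
  proof
    fix m
    have "matrix_inv U ** H m = matrix_inv U ** (H m ** (U ** matrix_inv U))" using inv_right[OF iU] by simp
    also have "\<dots> = matrix_inv U ** (H m ** U) ** matrix_inv U" by (simp add: matrix_mul_assoc)
    also have "H m ** U = U ** H (m + (-2))" using sh[rule_format, of "m + (-2)"] by simp
    also have "matrix_inv U ** (U ** H (m + (-2))) ** matrix_inv U = H (m + (-2)) ** matrix_inv U"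
      using inv_left[OF iU] by (simp add: matrix_mul_assoc)
    finally show "matrix_inv U ** H m = H (m + (-2)) ** matrix_inv U" .
  qed
  show ?thesis
  proof (cases "0 \<le> k")
    case True
    have "mpow U (nat k) ** H m = H (m + int (nat k) * 2) ** mpow U (nat k)"
      by (rule mpow_shift) (use sh in simp)
    thus ?thesis using True by (simp add: zpow_def mult.commute)
  next
    case False
    have "mpow (matrix_inv U) (nat (-k)) ** H m = H (m + int (nat (-k)) * (-2)) ** mpow (matrix_inv U) (nat (-k))"
      by (rule mpow_shift[OF sh2])
    thus ?thesis using False by (simp add: zpow_def mult.commute)
  qed
qed

lemma mpow_inv_pair:
  assumes "A ** B = (mat 1 :: 'd::finite op)"
  shows "mpow A n ** mpow B n = mat 1"
proof (induction n)
  case 0 show ?case by simp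
next
  case (Suc n)
  have "mpow A (Suc n) ** mpow B (Suc n) = A ** mpow A n ** (mpow B n ** B)"
    by (simp add: mpow_comm)
  also have "\<dots> = A ** (mpow A n ** mpow B n) ** B" by (simp add: matrix_mul_assoc)
  finally show ?case using Suc assms by simp
qed

lemma zpow_cancel:
  fixes U :: "'d::finite op"
  assumes iU: "invertible U"
  shows "zpow U k ** matrix_inv U ** zpow U (1-k) = mat 1"
proof -
  have a: "zpow U k ** matrix_inv U = zpow U (k-1)"
  proof (cases "1 \<le> k")
    case True
    define m where "m = nat (k-1)"
    have m: "nat k = Suc m" "nat (k-1) = m"
      using Suc_nat_eq_nat_zadd1[of "k-1"] True unfolding m_def by simp_all
    have "mpow U (Suc m) ** matrix_inv U = mpow U m ** (U ** matrix_inv U)"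
      by (simp add: mpow_comm matrix_mul_assoc)
    thus ?thesis using True m inv_right[OF iU] by (simp add: zpow_def)
  next
    case False
    hence m: "nat (-(k-1)) = Suc (nat (-k))" by simp
    have "mpow (matrix_inv U) (nat (-k)) ** matrix_inv U = mpow (matrix_inv U) (Suc (nat (-k)))"
      by (simp add: mpow_comm)
    thus ?thesis using False m by (simp add: zpow_def)
  qed
  have b: "zpow U j ** zpow U (-j) = mat 1" for j
  proof (cases "0 < j")
    case True thus ?thesis using mpow_inv_pair[OF inv_right[OF iU]] by (simp add: zpow_def)
  next
    case False
    show ?thesis
    proof (cases "j = 0")
      case True thus ?thesis by (simp add: zpow_def)
    next
      case False2: False
      thus ?thesis using False mpow_inv_pair[OF inv_left[OF iU]] by (simp add: zpow_def)
    qed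
  qed
  show ?thesis using a b[of "k-1"] by simp
qed

lemma conj3:
  assumes h: "iW ** W = (mat 1 :: 'd::finite op)"
  shows "(W ** A ** iW) ** (W ** B ** iW) ** (W ** C ** iW) = W ** (A ** B ** C) ** iW"
proof -
  have c: "iW ** (W ** X) = X" for X by (simp add: matrix_mul_assoc h)
  show ?thesis by (simp add: matrix_mul_assoc[symmetric] c)
qed

lemma zpow_conj:
  fixes W Y :: "'d::finite op"
  assumes iW: "invertible W" and iY: "invertible Y"
  shows "zpow (W ** Y ** matrix_inv W) k = W ** zpow Y k ** matrix_inv W"
proof -
  have l: "matrix_inv W ** W = mat 1" and r: "W ** matrix_inv W = mat 1"
    using inv_left[OF iW] inv_right[OF iW] by auto
  have mp: "mpow (W ** A ** matrix_inv W) n = W ** mpow A n ** matrix_inv W" for A n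
  proof (induction n)
    case 0 show ?case using r by simp
  next
    case (Suc n)
    have c: "matrix_inv W ** (W ** X) = X" for X by (simp add: matrix_mul_assoc l)
    show ?case using Suc by (simp add: matrix_mul_assoc[symmetric] c)
  qed
  have inv: "matrix_inv (W ** Y ** matrix_inv W) = W ** matrix_inv Y ** matrix_inv W"
  proof (rule inv_unique)
    have c: "matrix_inv W ** (W ** X) = X" for X by (simp add: matrix_mul_assoc l)
    have "W ** Y ** matrix_inv W ** (W ** matrix_inv Y ** matrix_inv W) = W ** (Y ** matrix_inv Y) ** matrix_inv W"
      by (simp add: matrix_mul_assoc[symmetric] c)
    thus "W ** Y ** matrix_inv W ** (W ** matrix_inv Y ** matrix_inv W) = mat 1"
      using inv_right[OF iY] r by simp
  qed
  show ?thesis by (simp add: zpow_def mp inv)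
qed

lemma scalar_abs:
  fixes sg bb pp aa cc :: complex
  assumes "pp \<noteq> 0" "aa \<noteq> 0" "bb \<noteq> 0" "cc \<noteq> 0" "sg * sg = 1"
  shows "sg * bb/(pp*cc*aa) * (pp*(aa*(sg/bb*cc))) = 1"
proof -
  have "sg * bb/(pp*cc*aa) * (pp*(aa*(sg/bb*cc))) = (sg * sg) * (bb*inverse bb) * (pp*inverse pp) * (aa*inverse aa) * (cc*inverse cc)"
    by (simp only: divide_inverse inverse_mult_distrib mult_ac)
  thus ?thesis using assms by simp
qed

theorem mainTheorem4:
  fixes p N n :: nat and q qh :: complex
    and u v :: "nat \<Rightarrow> complex^'d::finite^'d"
    and us vs \<kappa> \<xi> :: "nat \<Rightarrow> complex"
    and W :: "complex^'d^'d"
  assumes p_odd: "odd p" and p_ge: "p \<ge> 3"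
    and q_p: "q ^ p = 1" and q2_prim: "primitive_root p (q^2)"
    and qh: "qh^2 = q"
    and n_site: "n \<in> {1..N}"
    and inv_u: "\<forall>m\<in>{1..N}. invertible (u m)"
    and inv_v: "\<forall>m\<in>{1..N}. invertible (v m)"
    and weyl: "\<forall>m\<in>{1..N}. u m ** v m = mat q ** v m ** u m"
    and us_nz: "\<forall>m\<in>{1..N}. us m \<noteq> 0" and vs_nz: "\<forall>m\<in>{1..N}. vs m \<noteq> 0"
    and u_p: "\<forall>m\<in>{1..N}. mpow (u m) p = mat (us m ^ p)"
    and v_p: "\<forall>m\<in>{1..N}. mpow (v m) p = mat (vs m ^ p)"
    and commute: "\<forall>m\<in>{1..N}. \<forall>m'\<in>{1..N}. m \<noteq> m' \<longrightarrow>
        u m ** u m' = u m' ** u m \<and> u m ** v m' = v m' ** u m \<and>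
        v m ** u m' = u m' ** v m \<and> v m ** v m' = v m' ** v m"
    and kappa_nz: "\<forall>m\<in>{1..N}. \<kappa> m \<noteq> 0"
    and kappa4: "\<forall>m\<in>{1..N}. \<kappa> m ^ 4 \<noteq> 1"
    and vk: "\<forall>m\<in>{1..N}. vs m ^ (2*p) * \<kappa> m ^ (2*p) \<noteq> -1"
    and W_inv: "invertible W"
    and W_cyc: "\<forall>lam. conj2 W (monodromy qh u v \<kappa> \<xi> N lam) =
        laxprod qh u v \<kappa> \<xi> (rev [1..<n] @ rev [n..<N+1]) lam"
    and B_inv: "invertible (opB (monodromy qh u v \<kappa> \<xi> N (\<i> * \<kappa> n * qh * \<xi> n)))"
    and A_inv: "invertible (opA (monodromy qh u v \<kappa> \<xi> N (\<i> * inverse (\<kappa> n) * qh * \<xi> n)))"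
    and oota_u: "u n = W ** (matrix_inv (opB (monodromy qh u v \<kappa> \<xi> N (\<i> * \<kappa> n * qh * \<xi> n)))
        ** opA (monodromy qh u v \<kappa> \<xi> N (\<i> * \<kappa> n * qh * \<xi> n))) ** matrix_inv W"
    and oota_alpha: "alpha0 q (\<kappa> n) (u n) (v n) =
        W ** (matrix_inv (opA (monodromy qh u v \<kappa> \<xi> N (\<i> * inverse (\<kappa> n) * qh * \<xi> n)))
        ** opB (monodromy qh u v \<kappa> \<xi> N (\<i> * inverse (\<kappa> n) * qh * \<xi> n))) ** matrix_inv W"
  shows "(\<forall>k\<in>{1..p-1}.
            mpow (v n) (2*k) =
            mat ((-1)^k * (vs n ^ (2*p) * \<kappa> n ^ (2*p) + 1) /
                 (of_nat p * \<kappa> n ^ (2*k) * (\<kappa> n ^ 2 - inverse (\<kappa> n ^ 2)))) **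
            (\<Sum>a<p. mat (q powi (- (int k * (2 * int a - 1)))) ** beta q (\<kappa> n) (v n) (int a)))
       \<and> (\<forall>k::int. beta q (\<kappa> n) (v n) k =
            zpow (u n) k ** alpha0 q (\<kappa> n) (u n) (v n) ** zpow (u n) (1 - k))
       \<and> (\<forall>k::int. beta q (\<kappa> n) (v n) k =
            W ** (zpow (matrix_inv (opB (monodromy qh u v \<kappa> \<xi> N (\<i> * \<kappa> n * qh * \<xi> n)))
                         ** opA (monodromy qh u v \<kappa> \<xi> N (\<i> * \<kappa> n * qh * \<xi> n))) k
                  ** (matrix_inv (opA (monodromy qh u v \<kappa> \<xi> N (\<i> * inverse (\<kappa> n) * qh * \<xi> n)))
                      ** opB (monodromy qh u v \<kappa> \<xi> N (\<i> * inverse (\<kappa> n) * qh * \<xi> n)))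
                  ** zpow (matrix_inv (opB (monodromy qh u v \<kappa> \<xi> N (\<i> * \<kappa> n * qh * \<xi> n)))
                         ** opA (monodromy qh u v \<kappa> \<xi> N (\<i> * \<kappa> n * qh * \<xi> n))) (1 - k))
            ** matrix_inv W)"
proof -
  have p0: "p \<noteq> 0" using p_ge by simp
  have q0: "q \<noteq> 0" using q_p p0 by (metis power_0_left zero_neq_one)
  have iU: "invertible (u n)" using inv_u n_site by blast
  have wn: "u n ** v n = mat q ** v n ** u n" using weyl n_site by blast
  have k0: "\<kappa> n \<noteq> 0" using kappa_nz n_site by blast
  have k4: "\<kappa> n ^ 4 \<noteq> 1" using kappa4 n_site by blast
  have vkn: "vs n ^ (2*p) * \<kappa> n ^ (2*p) \<noteq> -1" using vk n_site by blast
  have vpn: "mpow (v n) p = mat (vs n ^ p)" using v_p n_site by blast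
  have Yp: "mpow (v n ** v n) p = mat (vs n ^ (2*p))"
  proof -
    have "mpow (v n ** v n) p = mpow (mpow (v n) 2) p" by (simp add: mpow_two)
    also have "\<dots> = mpow (v n) (2*p)" by (simp add: mpow_mult)
    also have "\<dots> = mpow (mpow (v n) p) 2" by (simp add: mpow_mult[symmetric] mult.commute)
    also have "\<dots> = mat (vs n ^ p) ** mat (vs n ^ p)" by (simp add: vpn mpow_two)
    also have "\<dots> = mat (vs n ^ (2*p))" by (simp add: mat_mult_mat power_mult_distrib mult_2 power_add)
    finally show ?thesis .
  qed
  have S: "(\<kappa> n ^ 2)^p * vs n ^ (2*p) \<noteq> -1"
  proof -
    have e: "(\<kappa> n ^ 2)^p = \<kappa> n ^ (2*p)" by (simp add: power_mult)
    show ?thesis using vkn unfolding e by (simp add: mult.commute)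
  qed
  have K0: "\<kappa> n ^ 2 \<noteq> 0" using k0 by simp
  have UY: "u n ** (v n ** v n) = mat (q^2) ** (v n ** v n) ** u n"
  proof -
    have "u n ** (v n ** v n) = (u n ** v n) ** v n" by (simp add: matrix_mul_assoc)
    also have "\<dots> = mat q ** v n ** u n ** v n" by (simp only: wn)
    also have "\<dots> = mat q ** v n ** (u n ** v n)" by (simp add: matrix_mul_assoc)
    also have "\<dots> = mat q ** v n ** (mat q ** v n ** u n)" by (simp only: wn)
    also have "\<dots> = mat q ** (v n ** mat q) ** v n ** u n" by (simp add: matrix_mul_assoc)
    also have "v n ** mat q = mat q ** v n" by (rule mat_comm[symmetric])
    also have "mat q ** (mat q ** v n) ** v n ** u n = mat (q^2) ** (v n ** v n) ** u n"
      by (simp add: matrix_mul_assoc mat_mult_mat power2_eq_square)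
    finally show ?thesis .
  qed
  have cp: "(q powi m)^p = 1" for m
  proof -
    have "(q powi m)^p = q powi (int p * m)" by (simp add: power_int_power' mult.commute)
    also have "\<dots> = (q powi (int p)) powi m" by (rule power_int_mult)
    finally show ?thesis using q_p by simp
  qed
  have Minv: "invertible (mat (q powi m * \<kappa> n ^ 2) ** (v n ** v n) + mat 1)" for m
    by (rule F_expand(1)[OF cp Yp p_odd S K0])
  define H where "H m = FF (v n ** v n) (\<kappa> n ^ 2) (q powi m)" for m
  have qq: "q^2 * q powi m = q powi (m+2)" for m
  proof -
    have "q powi (m+2) = q powi m * q powi 2" by (rule power_int_add) (simp add: q0)
    thus ?thesis by (simp add: mult.commute)
  qed
  have Hsh: "\<forall>m. u n ** H m = H (m+2) ** u n"
  proof
    fix m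
    have i2: "invertible (mat ((q^2 * q powi m) * \<kappa> n ^ 2) ** (v n ** v n) + mat 1)"
      unfolding qq by (rule Minv)
    show "u n ** H m = H (m+2) ** u n"
      unfolding H_def using FF_conj[OF UY Minv i2] qq by simp
  qed
  have beta_eq: "beta q (\<kappa> n) (v n) k = H (2*k-1)" for k
    by (simp add: beta_def FF_def H_def)
  have qm1: "q powi (-1) = inverse q" by (simp add: power_int_minus)
  have alpha_eq: "alpha0 q (\<kappa> n) (u n) (v n) = H (-1) ** matrix_inv (u n)"
    by (simp add: alpha0_def FF_def H_def qm1)
  have part2: "\<forall>k::int. beta q (\<kappa> n) (v n) k =
            zpow (u n) k ** alpha0 q (\<kappa> n) (u n) (v n) ** zpow (u n) (1 - k)"
  proof
    fix k :: int
    have "zpow (u n) k ** alpha0 q (\<kappa> n) (u n) (v n) ** zpow (u n) (1 - k)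
        = (zpow (u n) k ** H (-1)) ** matrix_inv (u n) ** zpow (u n) (1 - k)"
      unfolding alpha_eq by (simp add: matrix_mul_assoc)
    also have "zpow (u n) k ** H (-1) = H (-1 + 2*k) ** zpow (u n) k"
      by (rule zpow_shift[OF iU Hsh])
    also have "H (-1 + 2*k) ** zpow (u n) k ** matrix_inv (u n) ** zpow (u n) (1 - k)
        = H (-1 + 2*k) ** (zpow (u n) k ** matrix_inv (u n) ** zpow (u n) (1 - k))"
      by (simp add: matrix_mul_assoc)
    also have "\<dots> = H (2*k - 1)" using zpow_cancel[OF iU] by simp
    finally show "beta q (\<kappa> n) (v n) k =
            zpow (u n) k ** alpha0 q (\<kappa> n) (u n) (v n) ** zpow (u n) (1 - k)"
      by (simp add: beta_eq)
  qed
  have part1: "\<forall>k\<in>{1..p-1}.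
            mpow (v n) (2*k) =
            mat ((-1)^k * (vs n ^ (2*p) * \<kappa> n ^ (2*p) + 1) /
                 (of_nat p * \<kappa> n ^ (2*k) * (\<kappa> n ^ 2 - inverse (\<kappa> n ^ 2)))) **
            (\<Sum>a<p. mat (q powi (- (int k * (2 * int a - 1)))) ** beta q (\<kappa> n) (v n) (int a))"
  proof
    fix k assume kk: "k \<in> {1..p-1}"
    hence k1: "1 \<le> k" and k2: "k < p" using p0 by auto
    define K where "K = \<kappa> n ^ 2"
    define t where "t = vs n ^ (2*p)"
    have bF: "beta q (\<kappa> n) (v n) (int a) = FF (v n ** v n) (\<kappa> n ^ 2) (q powi (2*int a - 1))" for a
      by (simp add: beta_def FF_def)
    have PG: "(\<Sum>a<p. mat (q powi (-(int k*(2*int a-1)))) ** FF (v n ** v n) K (q powi (2*int a - 1)))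
       = mat (of_nat p * ((K-1/K)*((-1)^k/(1+K^p*t)*K^k))) ** mpow (v n ** v n) k"
      unfolding K_def t_def by (rule part1_generic[OF q0 q_p q2_prim Yp p_odd S K0 k1 k2])
    have sumeq: "(\<Sum>a<p. mat (q powi (- (int k * (2 * int a - 1)))) ** beta q (\<kappa> n) (v n) (int a))
       = mat (of_nat p * ((K-1/K)*((-1)^k/(1+K^p*t)*K^k))) ** mpow (v n ** v n) k"
      unfolding bF K_def[symmetric] by (rule PG)
    have e1: "vs n ^ (2*p) * \<kappa> n ^ (2*p) + 1 = 1 + K^p*t"
    proof -
      have e: "(\<kappa> n ^ 2)^p = \<kappa> n ^ (2*p)" by (simp add: power_mult)
      show ?thesis unfolding K_def t_def e by (simp add: mult.commute add.commute)
    qed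
    have e2: "\<kappa> n ^ (2*k) = K^k" unfolding K_def by (simp add: power_mult)
    have e3: "\<kappa> n ^ 2 - inverse (\<kappa> n ^ 2) = K - 1/K" unfolding K_def by (simp add: inverse_eq_divide)
    have nzb: "1 + K^p*t \<noteq> 0"
    proof
      assume "1 + K^p*t = 0"
      hence "K^p*t = -1" by (simp add: add_eq_0_iff)
      thus False using S unfolding K_def t_def by simp
    qed
    have nza: "K - 1/K \<noteq> 0"
    proof
      assume "K - 1/K = 0"
      hence "K * K = 1" using K0 unfolding K_def by (simp add: field_simps)
      hence "\<kappa> n ^ 4 = 1" unfolding K_def by (simp add: power_mult[symmetric] power2_eq_square[symmetric] mult_2 power_add[symmetric])
      thus False using k4 by simp
    qed
    have nzc: "K^k \<noteq> 0" using K0 unfolding K_def by simp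
    have sg: "(-1::complex)^k * (-1)^k = 1" by (simp add: power_add[symmetric] mult_2[symmetric] power_mult)
    have sc: "(-1)^k * (1 + K^p*t) / (of_nat p * K^k * (K - 1/K)) * (of_nat p * ((K-1/K)*((-1)^k/(1+K^p*t)*K^k))) = 1"
      by (rule scalar_abs) (use p0 nza nzb nzc sg in auto)
    have "mat ((-1)^k * (vs n ^ (2*p) * \<kappa> n ^ (2*p) + 1) /
                 (of_nat p * \<kappa> n ^ (2*k) * (\<kappa> n ^ 2 - inverse (\<kappa> n ^ 2)))) **
            (\<Sum>a<p. mat (q powi (- (int k * (2 * int a - 1)))) ** beta q (\<kappa> n) (v n) (int a))
         = mat ((-1)^k * (1 + K^p*t) / (of_nat p * K^k * (K - 1/K))) **
            (mat (of_nat p * ((K-1/K)*((-1)^k/(1+K^p*t)*K^k))) ** mpow (v n ** v n) k)"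
      unfolding e1 e2 e3 sumeq ..
    also have "\<dots> = mpow (v n ** v n) k"
      by (simp only: matrix_mul_assoc mat_mult_mat sc matrix_mul_lid)
    also have "\<dots> = mpow (v n) (2*k)" by (simp add: mpow_mult mpow_two)
    finally show "mpow (v n) (2*k) =
            mat ((-1)^k * (vs n ^ (2*p) * \<kappa> n ^ (2*p) + 1) /
                 (of_nat p * \<kappa> n ^ (2*k) * (\<kappa> n ^ 2 - inverse (\<kappa> n ^ 2)))) **
            (\<Sum>a<p. mat (q powi (- (int k * (2 * int a - 1)))) ** beta q (\<kappa> n) (v n) (int a))"
      by simp
  qed
  define Y1 where "Y1 = matrix_inv (opB (monodromy qh u v \<kappa> \<xi> N (\<i> * \<kappa> n * qh * \<xi> n)))
                         ** opA (monodromy qh u v \<kappa> \<xi> N (\<i> * \<kappa> n * qh * \<xi> n))"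
  define Y2 where "Y2 = matrix_inv (opA (monodromy qh u v \<kappa> \<xi> N (\<i> * inverse (\<kappa> n) * qh * \<xi> n)))
                      ** opB (monodromy qh u v \<kappa> \<xi> N (\<i> * inverse (\<kappa> n) * qh * \<xi> n))"
  have oU: "u n = W ** Y1 ** matrix_inv W" using oota_u unfolding Y1_def .
  have oA: "alpha0 q (\<kappa> n) (u n) (v n) = W ** Y2 ** matrix_inv W" using oota_alpha unfolding Y2_def .
  have lW: "matrix_inv W ** W = mat 1" and rW: "W ** matrix_inv W = mat 1"
    using inv_left[OF W_inv] inv_right[OF W_inv] by auto
  have Y1e: "Y1 = matrix_inv W ** u n ** W"
  proof -
    have c: "matrix_inv W ** (W ** X) = X" for X by (simp add: matrix_mul_assoc lW)
    show ?thesis unfolding oU by (simp add: matrix_mul_assoc[symmetric] c lW)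
  qed
  have iWi: "invertible (matrix_inv W)" using invI[OF lW] .
  have iY1: "invertible Y1" unfolding Y1e by (intro invertible_mult iWi iU W_inv)
  have part3: "\<forall>k::int. beta q (\<kappa> n) (v n) k = W ** (zpow Y1 k ** Y2 ** zpow Y1 (1 - k)) ** matrix_inv W"
  proof
    fix k :: int
    have "beta q (\<kappa> n) (v n) k = zpow (u n) k ** alpha0 q (\<kappa> n) (u n) (v n) ** zpow (u n) (1 - k)"
      using part2 by blast
    also have "\<dots> = (W ** zpow Y1 k ** matrix_inv W) ** (W ** Y2 ** matrix_inv W) ** (W ** zpow Y1 (1-k) ** matrix_inv W)"
      unfolding oA unfolding oU zpow_conj[OF W_inv iY1] ..
    also have "\<dots> = W ** (zpow Y1 k ** Y2 ** zpow Y1 (1 - k)) ** matrix_inv W"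
      by (rule conj3[OF lW])
    finally show "beta q (\<kappa> n) (v n) k = W ** (zpow Y1 k ** Y2 ** zpow Y1 (1 - k)) ** matrix_inv W" .
  qed
  show ?thesis using part1 part2 part3 unfolding Y1_def Y2_def by blast
qed

end
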